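(* Fix $\lambda\in(0,1)$ and let $L=\lambda/\sqrt{1-\lambda^2}$. Let $U\subset V_0$ be open, $\psi\colon U\to\mathbb{R}$ continuous with $\Gamma_\psi$ an intrinsic $\lambda$-Lipschitz graph, $I\subset\mathbb{R}$ an interval, and $g\colon I\to\mathbb{R}$ a differentiable function with $(t,0,g(t))\in U$ and $g'(t)+\psi(t,0,g(t))=0$ for all $t\in I$. Writing $\gamma(t)=(t,0,g(t))$, for all $s,t\in I$: $$|\psi(\gamma(s))-\psi(\gamma(t))|\le L|s-t|\qquad\text{and}\qquad |g(t)-g(s)-g'(s)(t-s)|\le L\frac{(t-s)^2}{2}.$$
   Context: $\mathbb H$ is $\mathbb{R}^3$ with product $uv=u+v+\frac12(x(u)y(v)-y(u)x(v))Z$, $Y=(0,1,0)$, $Z=(0,0,1)$, $u^t=tu$; $d$ is the Carnot–Carathéodory metric. $V_0=\{y=0\}$. $\Gamma_\psi=\{vY^{\psi(v)}:v\in U\}$ is an intrinsic $\lambda$-Lipschitz graph if $|y(q)-y(p)|\le\lambda d(p,q)$ for all $p,q\in\Gamma_\psi$. (The curve $\gamma$ is called a characteristic curve of $\Gamma_\psi$.) *)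

theory Defs
  imports "HOL-Analysis.Analysis"
begin

type_synonym heis = "real \<times> real \<times> real"

definition hx :: "heis \<Rightarrow> real" where "hx p = fst p"
definition hy :: "heis \<Rightarrow> real" where "hy p = fst (snd p)"
definition hz :: "heis \<Rightarrow> real" where "hz p = snd (snd p)"

definition hmult :: "heis \<Rightarrow> heis \<Rightarrow> heis" where
  "hmult u v = (hx u + hx v, hy u + hy v,
                hz u + hz v + (hx u * hy v - hy u * hx v) / 2)"

definition Ypow :: "real \<Rightarrow> heis" where "Ypow t = (0, t, 0)"

text \<open>Horizontal (absolutely continuous) curves on [0,1]:
  gamma' = h1 X(gamma) + h2 Y(gamma) a.e., with X = d_x - y/2 d_z, Y = d_y + x/2 d_z,
  written in integrated form with integrable controls h1, h2.\<close>
definition horizontal_curve :: "(real \<Rightarrow> heis) \<Rightarrow> (real \<Rightarrow> real) \<Rightarrow> (real \<Rightarrow> real) \<Rightarrow> bool" where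
  "horizontal_curve \<gamma> h1 h2 \<longleftrightarrow>
     h1 absolutely_integrable_on {0..1} \<and> h2 absolutely_integrable_on {0..1} \<and>
     (\<forall>t\<in>{0..1}.
        hx (\<gamma> t) = hx (\<gamma> 0) + integral {0..t} h1 \<and>
        hy (\<gamma> t) = hy (\<gamma> 0) + integral {0..t} h2 \<and>
        hz (\<gamma> t) = hz (\<gamma> 0) +
          integral {0..t} (\<lambda>s. (hx (\<gamma> s) * h2 s - hy (\<gamma> s) * h1 s) / 2))"

definition curve_length :: "(real \<Rightarrow> real) \<Rightarrow> (real \<Rightarrow> real) \<Rightarrow> real" where
  "curve_length h1 h2 = integral {0..1} (\<lambda>s. sqrt ((h1 s)\<^sup>2 + (h2 s)\<^sup>2))"

definition cc_dist :: "heis \<Rightarrow> heis \<Rightarrow> real" where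
  "cc_dist p q = Inf {curve_length h1 h2 | \<gamma> h1 h2.
      horizontal_curve \<gamma> h1 h2 \<and> \<gamma> 0 = p \<and> \<gamma> 1 = q}"

definition V0 :: "heis set" where "V0 = {p. hy p = 0}"

definition intrinsic_graph :: "heis set \<Rightarrow> (heis \<Rightarrow> real) \<Rightarrow> heis set" where
  "intrinsic_graph U \<psi> = {hmult v (Ypow (\<psi> v)) | v. v \<in> U}"

definition intrinsic_lipschitz_graph :: "real \<Rightarrow> heis set \<Rightarrow> (heis \<Rightarrow> real) \<Rightarrow> bool" where
  "intrinsic_lipschitz_graph lam U \<psi> \<longleftrightarrow>
     (\<forall>p\<in>intrinsic_graph U \<psi>. \<forall>q\<in>intrinsic_graph U \<psi>.
        \<bar>hy q - hy p\<bar> \<le> lam * cc_dist p q)"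

end

theory Submission
  imports Defs
begin


definition pA :: "real \<Rightarrow> real" where "pA w = w - 3*w^2 + 2*w^3"
definition pa :: "real \<Rightarrow> real" where "pa w = 1 - 6*w + 6*w^2"
definition pAi :: "real \<Rightarrow> real" where "pAi w = w^2/2 - w^3 + w^4/2"
definition pB :: "real \<Rightarrow> real" where "pB w = w - 6*w^2 + 10*w^3 - 5*w^4"
definition pb :: "real \<Rightarrow> real" where "pb w = 1 - 12*w + 30*w^2 - 20*w^3"
definition pBi :: "real \<Rightarrow> real" where "pBi w = w^2/2 - 2*w^3 + 5*w^4/2 - w^5"
definition pP :: "real \<Rightarrow> real" where "pP w = 4*w^4 - w^3 - 33/5*w^5 + 5*w^6 - 10/7*w^7"

lemma d_pA: "(pA has_real_derivative pa w) (at w)"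
  unfolding pA_def pa_def by (auto intro!: derivative_eq_intros simp: algebra_simps power2_eq_square power3_eq_cube)
lemma d_pB: "(pB has_real_derivative pb w) (at w)"
  unfolding pB_def pb_def by (auto intro!: derivative_eq_intros simp: algebra_simps power2_eq_square power3_eq_cube)
lemma d_pAi: "(pAi has_real_derivative pA w) (at w)"
  unfolding pAi_def pA_def by (auto intro!: derivative_eq_intros simp: algebra_simps power2_eq_square power3_eq_cube)
lemma d_pBi: "(pBi has_real_derivative pB w) (at w)"
  unfolding pBi_def pB_def by (auto intro!: derivative_eq_intros simp: algebra_simps power2_eq_square power3_eq_cube)
lemma d_pP: "(pP has_real_derivative (pA w * pb w - pB w * pa w)) (at w)"
  unfolding pP_def pA_def pB_def pa_def pb_def
  by (rule derivative_eq_intros refl | simp)+ (simp add: algebra_simps power2_eq_square power3_eq_cube eval_nat_numeral)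

lemma vals: "pA 0 = 0" "pA 1 = 0" "pB 0 = 0" "pB 1 = 0" "pAi 0 = 0" "pAi 1 = 0"
  "pBi 0 = 0" "pBi 1 = 0" "pP 0 = 0" "pP 1 = -1/35"
  by (simp_all add: pA_def pB_def pAi_def pBi_def pP_def)

lemma bnd_a: "0 \<le> w \<Longrightarrow> w \<le> 1 \<Longrightarrow> \<bar>pa w\<bar> \<le> 13"
  unfolding pa_def by (smt (verit) mult_le_one power_le_one zero_le_power)
lemma bnd_b: "0 \<le> w \<Longrightarrow> w \<le> 1 \<Longrightarrow> \<bar>pb w\<bar> \<le> 63"
  unfolding pb_def by (smt (verit) power_le_one zero_le_power)



lemma d_pA': "(pA has_real_derivative pa w) (at w within S)"
  using d_pA has_field_derivative_at_within by blast
lemma d_pB': "(pB has_real_derivative pb w) (at w within S)"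
  using d_pB has_field_derivative_at_within by blast
lemma d_pAi': "(pAi has_real_derivative pA w) (at w within S)"
  using d_pAi has_field_derivative_at_within by blast
lemma d_pBi': "(pBi has_real_derivative pB w) (at w within S)"
  using d_pBi has_field_derivative_at_within by blast
lemma d_pP': "(pP has_real_derivative (pA w * pb w - pB w * pa w)) (at w within S)"
  using d_pP has_field_derivative_at_within by blast

lemma cont_pa: "continuous_on S pa" unfolding pa_def by (intro continuous_intros)
lemma cont_pb: "continuous_on S pb" unfolding pb_def by (intro continuous_intros)

lemma ftc0:
  fixes F f :: "real \<Rightarrow> real"
  assumes "\<And>x. (F has_real_derivative f x) (at x)" "0 \<le> t"
  shows "integral {0..t} f = F t - F 0"
proof -
  have "(f has_integral (F t - F 0)) {0..t}"
    by (rule fundamental_theorem_of_calculus)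
       (use assms in \<open>auto simp: has_real_derivative_iff_has_vector_derivative[symmetric] intro: has_field_derivative_at_within\<close>)
  thus ?thesis by (rule integral_unique)
qed

lemma tri_sqrt:
  fixes h k x y :: real
  shows "sqrt ((h+x)^2+(k+y)^2) \<le> sqrt (h^2+k^2) + \<bar>x\<bar> + \<bar>y\<bar>"
proof -
  define S where "S = sqrt (h^2+k^2)"
  have S0: "0 \<le> S" unfolding S_def by simp
  have hS: "\<bar>h\<bar> \<le> S" unfolding S_def by (simp add: real_le_rsqrt)
  have kS: "\<bar>k\<bar> \<le> S" unfolding S_def by (simp add: real_le_rsqrt)
  have S2: "S^2 = h^2+k^2" unfolding S_def by simp
  have a: "h*x \<le> S*\<bar>x\<bar>" using hS
    by (metis abs_ge_self abs_mult abs_of_nonneg dual_order.trans mult_right_mono abs_ge_zero)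
  have b: "k*y \<le> S*\<bar>y\<bar>" using kS
    by (metis abs_ge_self abs_mult abs_of_nonneg dual_order.trans mult_right_mono abs_ge_zero)
  have "(h+x)^2+(k+y)^2 \<le> (S + \<bar>x\<bar> + \<bar>y\<bar>)^2"
  proof -
    have "(h+x)^2+(k+y)^2 = S^2 + 2*(h*x) + 2*(k*y) + x^2 + y^2"
      using S2 by (simp add: power2_eq_square algebra_simps)
    also have "\<dots> \<le> S^2 + 2*(S*\<bar>x\<bar>) + 2*(S*\<bar>y\<bar>) + \<bar>x\<bar>^2 + \<bar>y\<bar>^2 + 2*(\<bar>x\<bar>*\<bar>y\<bar>)"
      using a b mult_nonneg_nonneg[OF abs_ge_zero abs_ge_zero, of x y] by (simp only: power2_abs)
    also have "\<dots> = (S + \<bar>x\<bar> + \<bar>y\<bar>)^2" by (simp add: power2_eq_square algebra_simps)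
    finally show ?thesis .
  qed
  hence "sqrt ((h+x)^2+(k+y)^2) \<le> sqrt ((S + \<bar>x\<bar> + \<bar>y\<bar>)^2)" by (rule real_sqrt_le_mono)
  also have "\<dots> = S + \<bar>x\<bar> + \<bar>y\<bar>" using S0 by simp
  finally show ?thesis unfolding S_def .
qed

lemma cc_bound:
  fixes p q :: heis
  shows "cc_dist p q \<le> sqrt ((hx q - hx p)^2 + (hy q - hy p)^2)
     + 76 * sqrt 70 * sqrt \<bar>hz q - hz p - (hx p * hy q - hy p * hx q)/2\<bar>"
proof -
  obtain x0 y0 z0 where p: "p = (x0,y0,z0)" by (cases p) auto
  obtain x1 y1 z1 where q: "q = (x1,y1,z1)" by (cases q) auto
  define D where "D = z1 - z0 - (x0 * y1 - y0 * x1)/2"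
  define h where "h = x1 - x0"
  define k where "k = y1 - y0"
  define sg :: real where "sg = (if D \<ge> 0 then -1 else 1)"
  define c where "c = sqrt (70*\<bar>D\<bar>)"
  define h1 where "h1 = (\<lambda>w. h + c * sg*pa w)"
  define h2 where "h2 = (\<lambda>w. k + c*pb w)"
  define cx where "cx = (\<lambda>w. x0 + h*w + c * sg*pA w)"
  define cy where "cy = (\<lambda>w. y0 + k*w + c*pB w)"
  define cF where "cF = (\<lambda>w. ((x0*k - y0*h)*w + c*(x0*pB w - y0 * sg*pA w)
      + c*(h*(w*pB w - 2*pBi w) + k * sg*(2*pAi w - w*pA w)) + c^2 * sg*pP w)/2)"
  define \<gamma> where "\<gamma> = (\<lambda>w. (cx w, cy w, z0 + cF w))"
  have dx: "\<And>w. (cx has_real_derivative h1 w) (at w)"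
    unfolding cx_def h1_def by (auto intro!: derivative_eq_intros d_pA')
  have dy: "\<And>w. (cy has_real_derivative h2 w) (at w)"
    unfolding cy_def h2_def by (auto intro!: derivative_eq_intros d_pB')
  have dF: "\<And>w. (cF has_real_derivative (cx w * h2 w - cy w * h1 w)/2) (at w)"
    unfolding cF_def cx_def cy_def h1_def h2_def
    by (auto intro!: derivative_eq_intros d_pA' d_pB' d_pAi' d_pBi' d_pP' simp: field_simps power2_eq_square)
  have ct1: "continuous_on {0..1} h1" unfolding h1_def by (intro continuous_intros cont_pa)
  have ct2: "continuous_on {0..1} h2" unfolding h2_def by (intro continuous_intros cont_pb)
  have hc: "horizontal_curve \<gamma> h1 h2"
    unfolding horizontal_curve_def
  proof (intro conjI ballI)
    show "h1 absolutely_integrable_on {0..1}" using ct1 by (rule absolutely_integrable_continuous_real)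
    show "h2 absolutely_integrable_on {0..1}" using ct2 by (rule absolutely_integrable_continuous_real)
    fix t :: real assume t: "t \<in> {0..1}"
    show "hx (\<gamma> t) = hx (\<gamma> 0) + integral {0..t} h1"
      using ftc0[OF dx, of t] t by (simp add: \<gamma>_def hx_def)
    show "hy (\<gamma> t) = hy (\<gamma> 0) + integral {0..t} h2"
      using ftc0[OF dy, of t] t by (simp add: \<gamma>_def hy_def hz_def)
    show "hz (\<gamma> t) = hz (\<gamma> 0) + integral {0..t} (\<lambda>s. (hx (\<gamma> s) * h2 s - hy (\<gamma> s) * h1 s) / 2)"
      using ftc0[OF dF, of t] t by (simp add: \<gamma>_def hx_def hy_def hz_def cF_def vals)
  qed
  have g0: "\<gamma> 0 = p" by (simp add: \<gamma>_def p cx_def cy_def cF_def vals)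
  have c2: "c^2 = 70*\<bar>D\<bar>" unfolding c_def by simp
  have sD: "sg * \<bar>D\<bar> = - D" unfolding sg_def by auto
  have g1: "\<gamma> 1 = q"
  proof -
    have "cF 1 = ((x0*k - y0*h) - c^2 * sg/35)/2" by (simp add: cF_def vals)
    also have "\<dots> = ((x0*k - y0*h) + 2 * D)/2" unfolding c2 using sD by (simp add: algebra_simps)
    finally have "z0 + cF 1 = z1" by (simp add: D_def h_def k_def field_simps)
    thus ?thesis by (simp add: \<gamma>_def q cx_def cy_def vals h_def k_def)
  qed
  have mem: "curve_length h1 h2 \<in> {curve_length h1 h2 | \<gamma> h1 h2.
      horizontal_curve \<gamma> h1 h2 \<and> \<gamma> 0 = p \<and> \<gamma> 1 = q}"
    using hc g0 g1 by blast
  have bdd: "bdd_below {curve_length h1 h2 | \<gamma> h1 h2.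
      horizontal_curve \<gamma> h1 h2 \<and> \<gamma> 0 = p \<and> \<gamma> 1 = q}"
  proof (rule bdd_belowI[where m=0], clarify)
    fix g a b :: "real \<Rightarrow> real"
    show "0 \<le> curve_length a b" unfolding curve_length_def
      by (cases "(\<lambda>s. sqrt ((a s)\<^sup>2 + (b s)\<^sup>2)) integrable_on {0..1}")
         (auto intro: integral_nonneg simp: not_integrable_integral)
  qed
  have le1: "cc_dist p q \<le> curve_length h1 h2"
    unfolding cc_dist_def by (rule cInf_lower[OF mem bdd])
  have c0: "0 \<le> c" unfolding c_def by simp
  have s1: "\<bar>sg\<bar> = 1" unfolding sg_def by simp
  have pt: "sqrt ((h1 w)\<^sup>2 + (h2 w)\<^sup>2) \<le> sqrt (h^2+k^2) + 76 * c" if w: "w \<in> {0..1}" for w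
  proof -
    have "sqrt ((h1 w)\<^sup>2 + (h2 w)\<^sup>2) \<le> sqrt (h^2+k^2) + \<bar>c * sg*pa w\<bar> + \<bar>c*pb w\<bar>"
      unfolding h1_def h2_def by (rule tri_sqrt)
    also have "\<bar>c * sg*pa w\<bar> \<le> 13 * c"
      using bnd_a[of w] w c0 s1 by (simp add: abs_mult mult_left_mono mult.commute)
    also have "\<bar>c*pb w\<bar> \<le> 63 * c"
      using bnd_b[of w] w c0 by (simp add: abs_mult mult_left_mono mult.commute)
    finally show ?thesis by simp
  qed
  have "curve_length h1 h2 \<le> integral {0..1} (\<lambda>w::real. sqrt (h^2+k^2) + 76 * c)"
    unfolding curve_length_def
  proof (rule integral_le)
    show "(\<lambda>s. sqrt ((h1 s)\<^sup>2 + (h2 s)\<^sup>2)) integrable_on {0..1}"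
      by (rule integrable_continuous_interval) (use ct1 ct2 in \<open>intro continuous_intros\<close>)
    show "(\<lambda>w::real. sqrt (h^2+k^2) + 76 * c) integrable_on {0..1}" by (rule integrable_on_const) simp
  qed (use pt in auto)
  also have "\<dots> = sqrt (h^2+k^2) + 76 * c" by simp
  also have "c = sqrt 70 * sqrt \<bar>D\<bar>" unfolding c_def by (simp add: real_sqrt_mult)
  finally show ?thesis using le1
    by (simp add: p q hx_def hy_def hz_def D_def h_def k_def mult.assoc)
qed



lemma arith_band_pos:
  fixes fu fv fw K m e u v w :: real
  assumes uv: "u < v" and w: "u \<le> w" "w \<le> v" and m: "0 \<le> m" and e: "0 \<le> e"
   and h1: "\<bar>fw - fu\<bar> \<le> K*(w-u) + m" and h2: "\<bar>fv - fw\<bar> \<le> K*(v-w) + m"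
   and h3: "K*(v-u) + m - e \<le> fv - fu" and h4: "fv - fu \<le> K*(v-u) + m"
  shows "\<bar>fw - (fu + (fv - fu)*(w-u)/(v-u))\<bar> \<le> m + e"
proof -
  define \<theta> where "\<theta> = (w-u)/(v-u)"
  have t0: "0 \<le> \<theta>" and t1: "\<theta> \<le> 1" using uv w unfolding \<theta>_def by auto
  define d where "d = K*(v-u) + m - (fv - fu)"
  have d0: "0 \<le> d" "d \<le> e" using h3 h4 unfolding d_def by auto
  have eq1: "(fv - fu)*(w-u)/(v-u) = (fv - fu)*\<theta>" unfolding \<theta>_def by simp
  have eq2: "K*(v-u)*\<theta> = K*(w-u)" unfolding \<theta>_def using uv by simp
  have eq3: "(fv - fu)*\<theta> = K*(w-u) + m*\<theta> - d*\<theta>"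
    using eq2 unfolding d_def by (simp add: algebra_simps)
  have eq4: "K*(v-u) = K*(v-w) + K*(w-u)" by (simp add: algebra_simps)
  have b1: "0 \<le> m*\<theta>" "m*\<theta> \<le> m" using m t0 t1 by (auto simp: mult_left_le)
  have b2: "0 \<le> d*\<theta>" "d*\<theta> \<le> d" using d0 t0 t1 by (auto simp: mult_left_le)
  show ?thesis unfolding eq1 eq3 using h1 h2 b1 b2 d0 eq4 unfolding d_def by (simp add: abs_le_iff)
qed

lemma arith_band:
  fixes fu fv fw K m e u v w :: real
  assumes uv: "u < v" and w: "u \<le> w" "w \<le> v" and m: "0 \<le> m" and e: "0 \<le> e"
   and h1: "\<bar>fw - fu\<bar> \<le> K*(w-u) + m" and h2: "\<bar>fv - fw\<bar> \<le> K*(v-w) + m"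
   and h3: "K*(v-u) + m - e \<le> \<bar>fv - fu\<bar>" and h4: "\<bar>fv - fu\<bar> \<le> K*(v-u) + m"
  shows "\<bar>fw - (fu + (fv - fu)*(w-u)/(v-u))\<bar> \<le> m + e"
proof (cases "fu \<le> fv")
  case True
  then show ?thesis using arith_band_pos[OF uv w m e h1 h2] h3 h4 by simp
next
  case False
  have "\<bar>(-fw) - ((-fu) + ((-fv) - (-fu))*(w-u)/(v-u))\<bar> \<le> m + e"
    by (rule arith_band_pos[OF uv w m e]) (use h1 h2 h3 h4 False in \<open>auto simp: abs_minus_commute\<close>)
  moreover have "(-fw) - ((-fu) + ((-fv) - (-fu))*(w-u)/(v-u)) = - (fw - (fu + (fv - fu)*(w-u)/(v-u)))"
    using uv by (simp add: field_simps)
  ultimately show ?thesis by simp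
qed

lemma band_delta:
  fixes f g :: "real \<Rightarrow> real"
  assumes uv: "u < v" and sub: "{u..v} \<subseteq> S"
    and dg: "\<And>x. x \<in> S \<Longrightarrow> (g has_real_derivative (- f x)) (at x within S)"
    and bd: "\<And>w. w \<in> {u..v} \<Longrightarrow> \<bar>f w - (f u + (f v - f u)*(w-u)/(v-u))\<bar> \<le> e"
  shows "\<bar>g v - g u + (v-u)*(f u + f v)/2\<bar> \<le> e*(v-u)"
proof -
  define q where "q = (f v - f u)/(v-u)"
  define E where "E = (\<lambda>w. g w + (w-u)*f u + (w-u)^2*q/2)"
  have dE: "(E has_real_derivative (- f w + f u + (w-u)*q)) (at w within {u..v})" if "w \<in> {u..v}" for w
  proof -
    have "(g has_real_derivative (- f w)) (at w within {u..v})"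
    proof -
      have "w \<in> S" using that sub by auto
      then show ?thesis using DERIV_subset[OF dg sub] by blast
    qed
    then show ?thesis unfolding E_def
      by (auto intro!: derivative_eq_intros simp: power2_eq_square field_simps)
  qed
  have "norm (E v - E u) \<le> e * norm (v - u)"
  proof (rule field_differentiable_bound[where S="{u..v}"])
    show "convex {u..v}" by simp
    show "(E has_field_derivative (- f w + f u + (w-u)*q)) (at w within {u..v})" if "w \<in> {u..v}" for w
      using dE[OF that] .
    show "norm (- f w + f u + (w-u)*q) \<le> e" if "w \<in> {u..v}" for w
    proof -
      have "(f v - f u)*(w-u)/(v-u) = (w-u)*q" unfolding q_def by simp
      then show ?thesis using bd[OF that] by (simp add: abs_minus_commute)
    qed
  qed (use uv in auto)
  moreover have "E v - E u = g v - g u + (v-u)*(f u + f v)/2"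
    unfolding E_def q_def using uv by (simp add: power2_eq_square field_simps)
  ultimately show ?thesis using uv by simp
qed



lemma lipK:
  fixes f g :: "real \<Rightarrow> real" and lam C a b :: real
  assumes lam: "0 < lam" "lam < 1" and C: "0 \<le> C"
    and cf: "continuous_on {a..b} f"
    and dg: "\<And>x. x \<in> {a..b} \<Longrightarrow> (g has_real_derivative (- f x)) (at x within {a..b})"
    and H: "\<And>u v. u \<in> {a..b} \<Longrightarrow> v \<in> {a..b} \<Longrightarrow> u < v \<Longrightarrow>
      \<bar>f v - f u\<bar> \<le> lam * (sqrt ((v-u)^2 + (f v - f u)^2) + C * sqrt \<bar>g v - g u + (v-u)*(f u + f v)/2\<bar>)"
  shows "\<exists>K. \<forall>u\<in>{a..b}. \<forall>v\<in>{a..b}. \<bar>f v - f u\<bar> \<le> K * \<bar>v - u\<bar>"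
proof -
  define A where "A = lam^2*C^2/(1-lam) + 1"
  define K where "K = (A + lam)/(1-lam)"
  have AK: "A = (1-lam)*K - lam" unfolding K_def using lam by (simp add: field_simps)
  have A0: "A > 0" unfolding A_def using lam by (simp add: add_nonneg_pos)
  have Ab: "A*(1-lam) = lam^2*C^2 + (1-lam)" unfolding A_def using lam by (simp add: field_simps)
  define \<Phi> where "\<Phi> = (\<lambda>x::real\<times>real. \<bar>f (snd x) - f (fst x)\<bar> - K*\<bar>snd x - fst x\<bar>)"
  have "\<forall>u\<in>{a..b}. \<forall>v\<in>{a..b}. \<bar>f v - f u\<bar> \<le> K*\<bar>v-u\<bar>"
  proof (rule ccontr)
    assume "\<not> (\<forall>u\<in>{a..b}. \<forall>v\<in>{a..b}. \<bar>f v - f u\<bar> \<le> K*\<bar>v-u\<bar>)"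
    then obtain u v where uv: "u\<in>{a..b}" "v \<in> {a..b}" "\<bar>f v - f u\<bar> > K*\<bar>v-u\<bar>" by auto
    have "\<exists>x\<in>{a..b}\<times>{a..b}. \<forall>y\<in>{a..b}\<times>{a..b}. \<Phi> y \<le> \<Phi> x"
    proof (rule continuous_attains_sup)
      show "compact ({a..b}\<times>{a..b})" by (intro compact_Times compact_Icc)
      show "{a..b}\<times>{a..b} \<noteq> {}" using uv by auto
      have c1: "continuous_on ({a..b}\<times>{a..b}) (\<lambda>x. f (snd x))"
        by (rule continuous_on_compose2[OF cf]) (auto intro!: continuous_intros)
      have c2: "continuous_on ({a..b}\<times>{a..b}) (\<lambda>x. f (fst x))"
        by (rule continuous_on_compose2[OF cf]) (auto intro!: continuous_intros)
      show "continuous_on ({a..b}\<times>{a..b}) \<Phi>" unfolding \<Phi>_def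
        by (intro continuous_intros c1 c2)
    qed
    then obtain x0 where x0: "x0 \<in> {a..b}\<times>{a..b}" and mx: "\<And>y. y\<in>{a..b}\<times>{a..b} \<Longrightarrow> \<Phi> y \<le> \<Phi> x0"
      by blast
    define m where "m = \<Phi> x0"
    have m0: "m > 0" using mx[of "(u,v)"] uv unfolding m_def \<Phi>_def by auto
    have sym: "\<Phi> (p,q) = \<Phi> (q,p)" for p q unfolding \<Phi>_def by (simp add: abs_minus_commute)
    obtain u1 v1 where u1: "u1 \<in> {a..b}" and v1: "v1 \<in> {a..b}" and lt: "u1 < v1" and pm: "\<Phi> (u1,v1) = m"
    proof -
      obtain p q where pq: "x0 = (p,q)" by (cases x0)
      have "p \<noteq> q" using m0 unfolding m_def pq \<Phi>_def by auto
      then show ?thesis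
      proof (cases "p < q")
        case True then show ?thesis using that[of p q] x0 pq unfolding m_def by auto
      next
        case False then show ?thesis using that[of q p] x0 pq sym \<open>p \<noteq> q\<close> unfolding m_def by auto
      qed
    qed
    define h where "h = v1 - u1"
    have h0: "h > 0" unfolding h_def using lt by simp
    have keq: "\<bar>f v1 - f u1\<bar> = K*h + m" using pm lt unfolding \<Phi>_def h_def by auto
    have band: "\<bar>f w - (f u1 + (f v1 - f u1)*(w-u1)/(v1-u1))\<bar> \<le> m + 0" if w: "w \<in> {u1..v1}" for w
    proof (rule arith_band[where K=K])
      have wab: "w \<in> {a..b}" using w u1 v1 by auto
      show "\<bar>f w - f u1\<bar> \<le> K*(w-u1) + m"
        using mx[of "(u1,w)"] w u1 wab unfolding m_def \<Phi>_def by auto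
      show "\<bar>f v1 - f w\<bar> \<le> K*(v1-w) + m"
        using mx[of "(w,v1)"] w v1 wab unfolding m_def \<Phi>_def by auto
    qed (use lt w keq m0 h_def in auto)
    have D: "\<bar>g v1 - g u1 + (v1-u1)*(f u1 + f v1)/2\<bar> \<le> (m+0)*(v1-u1)"
      by (rule band_delta[OF lt _ dg band]) (use u1 v1 in auto)
    define k where "k = f v1 - f u1"
    have Hh: "\<bar>k\<bar> \<le> lam * (sqrt (h^2 + k^2) + C * sqrt \<bar>g v1 - g u1 + (v1-u1)*(f u1 + f v1)/2\<bar>)"
      unfolding h_def k_def by (rule H[OF u1 v1 lt])
    have s1: "sqrt (h^2 + k^2) \<le> h + \<bar>k\<bar>"
      using tri_sqrt[of h 0 0 k] h0 by simp
    have s2: "sqrt \<bar>g v1 - g u1 + (v1-u1)*(f u1 + f v1)/2\<bar> \<le> sqrt (m*h)"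
      using D unfolding h_def by (simp add: mult.commute)
    have "\<bar>k\<bar> \<le> lam * (h + \<bar>k\<bar> + C * sqrt (m*h))"
    proof -
      have "sqrt (h^2 + k^2) + C * sqrt \<bar>g v1 - g u1 + (v1-u1)*(f u1 + f v1)/2\<bar> \<le> h + \<bar>k\<bar> + C * sqrt (m*h)"
        using s1 s2 C by (meson add_mono mult_left_mono)
      then show ?thesis using Hh lam by (smt (verit) mult_left_mono)
    qed
    then have "K*h + m \<le> lam*(h + (K*h+m)) + lam*C * sqrt(m*h)" using keq k_def by (simp add: algebra_simps)
    moreover have "A*h + (1-lam)*m = (K*h+m) - lam*(h + (K*h+m))" unfolding AK by (simp add: algebra_simps)
    ultimately have X: "A*h + (1-lam)*m \<le> lam*C * sqrt(m*h)" by linarith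
    have Xp: "0 \<le> A*h + (1-lam)*m" using A0 h0 m0 lam by simp
    have "(A*h + (1-lam)*m)^2 \<le> (lam*C * sqrt(m*h))^2"
      using X Xp by (simp add: power_mono)
    also have "\<dots> = lam^2*C^2*(m*h)" using m0 h0 by (simp add: power_mult_distrib)
    finally have Y: "(A*h + (1-lam)*m)^2 \<le> lam^2*C^2*(m*h)" .
    have Z: "(A*h + (1-lam)*m)^2 = (A*h - (1-lam)*m)^2 + 4*(A*(1-lam))*(m*h)"
      by (simp add: power2_eq_square algebra_simps)
    have "0 \<le> (A*h - (1-lam)*m)^2" by simp
    moreover have "(lam^2*C^2)*(m*h) < 4*(A*(1-lam))*(m*h)"
    proof -
      have q0: "0 \<le> lam^2*C^2" by simp
      have "0 < 4*(A*(1-lam)) - lam^2*C^2" unfolding Ab using q0 lam by (smt (verit))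
      then have "0 < (4*(A*(1-lam)) - lam^2*C^2) * (m*h)" using m0 h0 by simp
      then show ?thesis by (simp add: algebra_simps)
    qed
    ultimately show False using Y Z by linarith
  qed
  then show ?thesis by blast
qed



lemma sharp_arith:
  fixes \<rho> M t lam C :: real
  assumes lam: "0 < lam" "lam < 1" and C: "0 \<le> C" and M: "0 < M"
    and g0: "0 < M^2*(1-lam^2) - lam^2"
    and t0: "0 < t" "t \<le> 1" and t1: "t*(4*M*(1+lam*C)) \<le> M^2*(1-lam^2) - lam^2"
    and t2: "2*t*(1+lam*C) \<le> M"
    and r1: "M - t^2 < \<rho>" and r2: "\<rho> \<le> M"
    and H: "\<rho> - lam*C*t \<le> lam * sqrt (1 + \<rho>^2)"
  shows False
proof -
  define \<delta> where "\<delta> = lam*C*t"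
  have d0: "0 \<le> \<delta>" unfolding \<delta>_def using lam C t0 by simp
  have tt: "t^2 \<le> t" using t0 by (simp add: power2_eq_square mult_left_le)
  have tdM: "t^2 + \<delta> < M"
  proof -
    have "t^2 + \<delta> \<le> t*(1+lam*C)" unfolding \<delta>_def using tt by (simp add: algebra_simps)
    also have "\<dots> < M"
    proof -
      have "0 < t*(1+lam*C)" using t0 lam C by (simp add: add_pos_nonneg)
      moreover have "2*t*(1+lam*C) = 2*(t*(1+lam*C))" by simp
      ultimately show ?thesis using t2 by linarith
    qed
    finally show ?thesis .
  qed
  have pos: "0 < \<rho> - \<delta>" using tdM r1 by linarith
  have "(\<rho> - \<delta>)^2 \<le> (lam * sqrt (1 + \<rho>^2))^2"
    using H pos unfolding \<delta>_def by (intro power_mono) auto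
  also have "\<dots> = lam^2*(1+\<rho>^2)" by (simp add: power_mult_distrib)
  finally have sq: "(\<rho> - \<delta>)^2 \<le> lam^2*(1+\<rho>^2)" .
  have e1: "\<rho>^2*(1-lam^2) - 2*(\<rho>*\<delta>) \<le> lam^2"
  proof -
    have "\<rho>^2*(1-lam^2) - 2*(\<rho>*\<delta>) = (\<rho> - \<delta>)^2 - lam^2*(1+\<rho>^2) + lam^2 - \<delta>^2"
      by (simp add: power2_eq_square algebra_simps)
    moreover have "0 \<le> \<delta>^2" by simp
    ultimately show ?thesis using sq by linarith
  qed
  have rM: "0 \<le> M - t^2" using tdM d0 by linarith
  have e2: "(M - t^2)^2 \<le> \<rho>^2" using rM r1 by (intro power_mono) auto
  have e3: "M^2 - 2*(M*t^2) \<le> (M - t^2)^2"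
  proof -
    have "(M - t^2)^2 = M^2 - 2*(M*t^2) + (t^2)^2" by (simp add: power2_eq_square algebra_simps)
    moreover have "0 \<le> (t^2)^2" by simp
    ultimately show ?thesis by linarith
  qed
  have l1: "0 < 1 - lam^2" using lam by (simp add: power_less_one_iff abs_less_iff)
  have e4: "(M^2 - 2*(M*t^2))*(1-lam^2) \<le> \<rho>^2*(1-lam^2)"
    using e2 e3 l1 by (intro mult_right_mono) auto
  have e5: "\<rho>*\<delta> \<le> M*\<delta>" using r2 d0 by (intro mult_right_mono)
  have e6: "(M*t^2)*(1-lam^2) \<le> M*t"
  proof -
    have "(M*t^2)*(1-lam^2) \<le> (M*t^2)*1" using M l1 lam by (intro mult_left_mono) auto
    also have "\<dots> \<le> M*t" using tt M by simp
    finally show ?thesis .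
  qed
  have e7: "M^2*(1-lam^2) - lam^2 \<le> 2*(M*t) + 2*(M*\<delta>)"
    using e1 e4 e5 e6 by (simp add: algebra_simps) 
  have "2*(M*t) + 2*(M*\<delta>) = (t*(4*M*(1+lam*C)))/2" unfolding \<delta>_def by (simp add: algebra_simps)
  then show False using e7 t1 g0 by linarith
qed

lemma lipL:
  fixes f g :: "real \<Rightarrow> real" and lam C a b :: real
  assumes lam: "0 < lam" "lam < 1" and C: "0 \<le> C"
    and cf: "continuous_on {a..b} f"
    and dg: "\<And>x. x \<in> {a..b} \<Longrightarrow> (g has_real_derivative (- f x)) (at x within {a..b})"
    and H: "\<And>u v. u \<in> {a..b} \<Longrightarrow> v \<in> {a..b} \<Longrightarrow> u < v \<Longrightarrow>
      \<bar>f v - f u\<bar> \<le> lam * (sqrt ((v-u)^2 + (f v - f u)^2) + C * sqrt \<bar>g v - g u + (v-u)*(f u + f v)/2\<bar>)"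
    and u: "u \<in> {a..b}" and v: "v \<in> {a..b}" and uv: "u \<le> v"
  shows "\<bar>f v - f u\<bar> \<le> lam / sqrt (1 - lam^2) * (v - u)"
proof (cases "u = v")
  case True then show ?thesis by simp
next
  case False
  with uv have uv': "u < v" by simp
  define L where "L = lam / sqrt (1 - lam^2)"
  have l1: "0 < 1 - lam^2" using lam by (simp add: power_less_one_iff abs_less_iff)
  have L0: "0 < L" unfolding L_def using lam l1 by simp
  obtain K where K: "\<And>x y. x\<in>{a..b} \<Longrightarrow> y\<in>{a..b} \<Longrightarrow> \<bar>f y - f x\<bar> \<le> K * \<bar>y - x\<bar>"
    using lipK[OF lam C cf dg H] by blast
  define R where "R = {\<bar>f y - f x\<bar>/(y-x) | x y. x\<in>{a..b} \<and> y\<in>{a..b} \<and> x < y}"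
  have Rne: "R \<noteq> {}" unfolding R_def using u v uv' by blast
  have Rbd: "bdd_above R" unfolding R_def
  proof (rule bdd_aboveI[where M=K], clarify)
    fix x y assume "x\<in>{a..b}" "y\<in>{a..b}" "x < y"
    then show "\<bar>f y - f x\<bar>/(y-x) \<le> K" using K[of x y] by (simp add: divide_le_eq)
  qed
  define M where "M = Sup R"
  have allM: "\<bar>f y - f x\<bar> \<le> M*(y-x)" if "x\<in>{a..b}" "y\<in>{a..b}" "x \<le> y" for x y
  proof (cases "x = y")
    case True then show ?thesis by simp
  next
    case False
    then have xy: "x < y" using that by simp
    have "\<bar>f y - f x\<bar>/(y-x) \<le> M" unfolding M_def
      by (rule cSup_upper[OF _ Rbd]) (unfold R_def, use that xy in blast)
    then show ?thesis using xy by (simp add: divide_le_eq)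
  qed
  have "M \<le> L"
  proof (rule ccontr)
    assume "\<not> M \<le> L"
    then have hML: "L < M" by simp
    then have Mpos: "0 < M" using L0 by simp
    have "lam < M * sqrt (1 - lam^2)" using hML l1 unfolding L_def by (simp add: divide_less_eq)
    then have "lam^2 < (M * sqrt (1 - lam^2))^2" using lam by (intro power_strict_mono) auto
    then have g0: "0 < M^2*(1-lam^2) - lam^2" using l1 by (simp add: power_mult_distrib)
    define B where "B = 1 + lam*C"
    have B1: "1 \<le> B" unfolding B_def using lam C by simp
    define t where "t = min 1 (min ((M^2*(1-lam^2) - lam^2)/(4*M*B)) (M/(2*B)))"
    have t0: "0 < t" unfolding t_def using g0 Mpos B1 by simp
    have t1: "t \<le> 1" unfolding t_def by simp
    have t2: "t*(4*M*B) \<le> M^2*(1-lam^2) - lam^2"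
    proof -
      have "t \<le> (M^2*(1-lam^2) - lam^2)/(4*M*B)" unfolding t_def by simp
      then show ?thesis using Mpos B1 by (simp add: le_divide_eq)
    qed
    have t3: "2*t*B \<le> M"
    proof -
      have "t \<le> M/(2*B)" unfolding t_def by simp
      then show ?thesis using B1 by (simp add: le_divide_eq mult_ac)
    qed
    have "M - t^2 < Sup R" unfolding M_def[symmetric] using t0 by simp
    then obtain r where "r \<in> R" "M - t^2 < r" using less_cSup_iff[OF Rne Rbd] by blast
    then obtain x y where x: "x\<in>{a..b}" and y: "y\<in>{a..b}" and xy: "x < y"
      and rr: "M - t^2 < \<bar>f y - f x\<bar>/(y-x)" unfolding R_def by blast
    define h where "h = y - x"
    define k where "k = f y - f x"
    define \<rho> where "\<rho> = \<bar>k\<bar>/h"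
    have h0: "0 < h" unfolding h_def using xy by simp
    have kr: "\<bar>k\<bar> = \<rho>*h" unfolding \<rho>_def using h0 by simp
    have r1: "M - t^2 < \<rho>" using rr unfolding \<rho>_def h_def k_def .
    have r2: "\<rho> \<le> M" unfolding \<rho>_def h_def k_def using allM[OF x y] xy by (simp add: divide_le_eq)
    have band: "\<bar>f w - (f x + (f y - f x)*(w-x)/(y-x))\<bar> \<le> 0 + t^2*h" if w: "w \<in> {x..y}" for w
    proof (rule arith_band[where K=M])
      have wab: "w \<in> {a..b}" using w x y by auto
      show "\<bar>f w - f x\<bar> \<le> M*(w-x) + 0" using allM[OF x wab] w by simp
      show "\<bar>f y - f w\<bar> \<le> M*(y-w) + 0" using allM[OF wab y] w by simp
      have "(M - t^2)*h \<le> \<rho>*h" using r1 h0 by simp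
      then show "M*(y-x) + 0 - t^2*h \<le> \<bar>f y - f x\<bar>"
        using kr unfolding h_def k_def by (simp add: algebra_simps)
      show "\<bar>f y - f x\<bar> \<le> M*(y-x) + 0" using allM[OF x y] xy by simp
    qed (use xy w t0 h0 in auto)
    have D: "\<bar>g y - g x + (y-x)*(f x + f y)/2\<bar> \<le> (0 + t^2*h)*(y-x)"
      by (rule band_delta[OF xy _ dg band]) (use x y in auto)
    have sD: "sqrt \<bar>g y - g x + (y-x)*(f x + f y)/2\<bar> \<le> t*h"
    proof -
      have "sqrt \<bar>g y - g x + (y-x)*(f x + f y)/2\<bar> \<le> sqrt ((t*h)^2)"
        using D unfolding h_def by (intro real_sqrt_le_mono) (simp add: power2_eq_square algebra_simps)
      also have "\<dots> = t*h" using t0 h0 by simp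
      finally show ?thesis .
    qed
    have Hh: "\<bar>k\<bar> \<le> lam * (sqrt (h^2 + k^2) + C * sqrt \<bar>g y - g x + (y-x)*(f x + f y)/2\<bar>)"
      unfolding h_def k_def by (rule H[OF x y xy])
    have sq: "sqrt (h^2 + k^2) = h * sqrt (1 + \<rho>^2)"
    proof -
      have "k^2 = (\<rho>*h)^2" by (metis kr power2_abs)
      then have "h^2 + k^2 = h^2 * (1 + \<rho>^2)"
        by (simp add: power_mult_distrib algebra_simps)
      then show ?thesis using h0 by (simp add: real_sqrt_mult)
    qed
    have "\<rho>*h \<le> lam * (h * sqrt (1 + \<rho>^2) + C * (t*h))"
    proof -
      have "C * sqrt \<bar>g y - g x + (y-x)*(f x + f y)/2\<bar> \<le> C*(t*h)" using sD C by (rule mult_left_mono)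
      then have "sqrt (h^2 + k^2) + C * sqrt \<bar>g y - g x + (y-x)*(f x + f y)/2\<bar> \<le> h * sqrt (1 + \<rho>^2) + C*(t*h)"
        using sq by linarith
      then have "lam * (sqrt (h^2 + k^2) + C * sqrt \<bar>g y - g x + (y-x)*(f x + f y)/2\<bar>) \<le> lam * (h * sqrt (1 + \<rho>^2) + C*(t*h))"
        using lam by (intro mult_left_mono) auto
      then show ?thesis using Hh kr by linarith
    qed
    then have "(\<rho> - lam*C*t)*h \<le> (lam * sqrt (1 + \<rho>^2))*h" by (simp add: algebra_simps)
    then have "\<rho> - lam*C*t \<le> lam * sqrt (1 + \<rho>^2)" using h0 by simp
    then show False
      using sharp_arith[OF lam C Mpos g0 t0 t1 _ _ r1 r2] t2 t3 unfolding B_def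
      by (simp add: algebra_simps)
  qed
  then have "M*(v-u) \<le> L*(v-u)" using uv by (simp add: mult_right_mono)
  then show ?thesis using allM[OF u v uv] unfolding L_def by simp
qed



lemma incr_within:
  fixes \<phi> \<phi>' :: "real \<Rightarrow> real"
  assumes ab: "a \<le> b"
    and d: "\<And>x. x \<in> {a..b} \<Longrightarrow> (\<phi> has_real_derivative \<phi>' x) (at x within {a..b})"
    and nn: "\<And>x. x \<in> {a..b} \<Longrightarrow> 0 \<le> \<phi>' x"
  shows "\<phi> a \<le> \<phi> b"
proof (rule DERIV_nonneg_imp_increasing_open[OF ab])
  fix x assume x: "a < x" "x < b"
  have "(\<phi> has_real_derivative \<phi>' x) (at x)"
    using d[of x] x at_within_Icc_at[OF x] by simp
  then show "\<exists>y. DERIV \<phi> x :> y \<and> 0 \<le> y" using nn[of x] x by auto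
next
  show "continuous_on {a..b} \<phi>"
    unfolding continuous_on_eq_continuous_within using d DERIV_continuous by blast
qed

lemma taylor1:
  fixes f g :: "real \<Rightarrow> real"
  assumes ab: "a \<le> b"
    and dg: "\<And>x. x \<in> {a..b} \<Longrightarrow> (g has_real_derivative (- f x)) (at x within {a..b})"
    and lip: "\<And>x y. x \<in> {a..b} \<Longrightarrow> y \<in> {a..b} \<Longrightarrow> \<bar>f y - f x\<bar> \<le> L * \<bar>y - x\<bar>"
    and s: "s \<in> {a..b}" and t: "t \<in> {a..b}"
    and sg: "\<bar>\<sigma>\<bar> = (1::real)"
  shows "\<sigma> * (g t - g s + f s * (t - s)) \<le> L * (t - s)^2 / 2"
proof -
  define \<phi> where "\<phi> = (\<lambda>w. \<sigma> * (g w - g s + f s * (w - s)) - L * (w - s)^2 / 2)"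
  define \<phi>' where "\<phi>' = (\<lambda>w. \<sigma> * (- f w + f s) - L * (w - s))"
  have d: "(\<phi> has_real_derivative \<phi>' x) (at x within S)" if "S \<subseteq> {a..b}" "x \<in> S" for x S
  proof -
    have "(g has_real_derivative (- f x)) (at x within S)"
      using DERIV_subset[OF dg that(1)] that by auto
    then show ?thesis unfolding \<phi>_def \<phi>'_def
      by (auto intro!: derivative_eq_intros simp: power2_eq_square field_simps)
  qed
  have bnd: "\<bar>f w - f s\<bar> \<le> L * \<bar>w - s\<bar>" if "w \<in> {a..b}" for w using lip[OF s that] .
  have sb: "\<bar>\<sigma> * (- f w + f s)\<bar> \<le> L * \<bar>w - s\<bar>" if "w \<in> {a..b}" for w
    using bnd[OF that] sg by (simp add: abs_mult abs_minus_commute)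
  have "\<phi> t \<le> \<phi> s"
  proof (cases "s \<le> t")
    case True
    have "(\<lambda>w. - \<phi> w) s \<le> (\<lambda>w. - \<phi> w) t"
    proof (rule incr_within[OF True])
      fix x assume x: "x \<in> {s..t}"
      have xab: "x \<in> {a..b}" using x s t by auto
      show "((\<lambda>w. - \<phi> w) has_real_derivative - \<phi>' x) (at x within {s..t})"
        using d[of "{s..t}" x] x s t by (auto intro!: derivative_eq_intros)
      show "0 \<le> - \<phi>' x" using sb[OF xab] x unfolding \<phi>'_def by (auto simp: abs_le_iff)
    qed
    then show ?thesis by simp
  next
    case False
    then have ts: "t \<le> s" by simp
    show ?thesis
    proof (rule incr_within[OF ts])
      fix x assume x: "x \<in> {t..s}"
      have xab: "x \<in> {a..b}" using x s t by auto
      show "(\<phi> has_real_derivative \<phi>' x) (at x within {t..s})"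
        using d[of "{t..s}" x] x s t by auto
      have e: "L*(x - s) = -(L*(s-x))" by (simp add: algebra_simps)
      have "\<bar>\<sigma> * (- f x + f s)\<bar> \<le> L * (s - x)" using sb[OF xab] x by simp
      then show "0 \<le> \<phi>' x" unfolding \<phi>'_def using e by (simp add: abs_le_iff)
    qed
  qed
  then show ?thesis unfolding \<phi>_def by simp
qed



theorem mainTheorem13:
  fixes lam :: real and U :: "heis set" and \<psi> :: "heis \<Rightarrow> real"
    and I :: "real set" and g g' :: "real \<Rightarrow> real"
  assumes "0 < lam" and "lam < 1"
    and "U \<subseteq> V0" and "openin (top_of_set V0) U"
    and "continuous_on U \<psi>"
    and "intrinsic_lipschitz_graph lam U \<psi>"
    and "is_interval I"
    and "\<And>t. t \<in> I \<Longrightarrow> (g has_real_derivative g' t) (at t within I)"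
    and "\<And>t. t \<in> I \<Longrightarrow> (t, 0, g t) \<in> U"
    and "\<And>t. t \<in> I \<Longrightarrow> g' t + \<psi> (t, 0, g t) = 0"
    and "s \<in> I" and "t \<in> I"
  shows "\<bar>\<psi> (s, 0, g s) - \<psi> (t, 0, g t)\<bar> \<le> (lam / sqrt (1 - lam\<^sup>2)) * \<bar>s - t\<bar>
       \<and> \<bar>g t - g s - g' s * (t - s)\<bar> \<le> (lam / sqrt (1 - lam\<^sup>2)) * (t - s)\<^sup>2 / 2"
proof -
  note lam = assms(1,2)
  define f where "f = (\<lambda>u. \<psi> (u, 0, g u))"
  define L where "L = lam / sqrt (1 - lam\<^sup>2)"
  define C :: real where "C = 76 * sqrt 70"
  have C0: "0 \<le> C" unfolding C_def by simp
  define a where "a = min s t"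
  define b where "b = max s t"
  have ab: "a \<le> b" unfolding a_def b_def by simp
  have sI: "{a..b} \<subseteq> I"
  proof
    fix x assume "x \<in> {a..b}"
    then have x: "min s t \<le> x" "x \<le> max s t" unfolding a_def b_def by auto
    have iv: "\<And>c d y. c \<in> I \<Longrightarrow> d \<in> I \<Longrightarrow> c \<le> y \<Longrightarrow> y \<le> d \<Longrightarrow> y \<in> I"
      using assms(7) unfolding is_interval_1 by blast
    show "x \<in> I"
    proof (cases "s \<le> t")
      case True then show ?thesis using iv[OF assms(11) assms(12), of x] x by simp
    next
      case False then show ?thesis using iv[OF assms(12) assms(11), of x] x by simp
    qed
  qed
  have sab: "s \<in> {a..b}" and tab: "t \<in> {a..b}" unfolding a_def b_def by auto
  have g'f: "g' x = - f x" if "x \<in> I" for x using assms(10)[OF that] unfolding f_def by simp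
  have dgI: "(g has_real_derivative (- f x)) (at x within I)" if "x \<in> I" for x
    using assms(8)[OF that] g'f[OF that] by simp
  have dg: "(g has_real_derivative (- f x)) (at x within {a..b})" if "x \<in> {a..b}" for x
    using DERIV_subset[OF dgI sI] that sI by auto
  have gc: "continuous_on {a..b} g"
    unfolding continuous_on_eq_continuous_within using dg DERIV_continuous by blast
  have cf: "continuous_on {a..b} f"
  proof -
    have "continuous_on {a..b} (\<lambda>u. (u, 0::real, g u))" by (intro continuous_intros gc)
    moreover have "(\<lambda>u. (u, 0::real, g u)) ` {a..b} \<subseteq> U" using assms(9) sI by auto
    ultimately show ?thesis unfolding f_def using continuous_on_compose2[OF assms(5)] by blast
  qed
  have H: "\<bar>f v - f u\<bar> \<le> lam * (sqrt ((v-u)^2 + (f v - f u)^2) + C * sqrt \<bar>g v - g u + (v-u)*(f u + f v)/2\<bar>)"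
    if u: "u \<in> {a..b}" and v: "v \<in> {a..b}" and uv: "u < v" for u v
  proof -
    define p where "p = hmult (u, 0, g u) (Ypow (\<psi> (u, 0, g u)))"
    define q where "q = hmult (v, 0, g v) (Ypow (\<psi> (v, 0, g v)))"
    have pG: "p \<in> intrinsic_graph U \<psi>" unfolding intrinsic_graph_def p_def
      using assms(9) u sI by blast
    have qG: "q \<in> intrinsic_graph U \<psi>" unfolding intrinsic_graph_def q_def
      using assms(9) v sI by blast
    have lipg: "\<bar>hy q - hy p\<bar> \<le> lam * cc_dist p q"
      using assms(6) pG qG unfolding intrinsic_lipschitz_graph_def by blast
    have pe: "hx p = u" "hy p = f u" "hz p = g u + u * f u / 2"
      unfolding p_def f_def by (simp_all add: hmult_def Ypow_def hx_def hy_def hz_def)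
    have qe: "hx q = v" "hy q = f v" "hz q = g v + v * f v / 2"
      unfolding q_def f_def by (simp_all add: hmult_def Ypow_def hx_def hy_def hz_def)
    have De: "hz q - hz p - (hx p * hy q - hy p * hx q)/2 = g v - g u + (v-u)*(f u + f v)/2"
      unfolding pe qe by (simp add: field_simps)
    have "cc_dist p q \<le> sqrt ((v-u)^2 + (f v - f u)^2) + C * sqrt \<bar>g v - g u + (v-u)*(f u + f v)/2\<bar>"
      using cc_bound[of p q] unfolding De unfolding pe qe C_def .
    then have "lam * cc_dist p q \<le> lam * (sqrt ((v-u)^2 + (f v - f u)^2) + C * sqrt \<bar>g v - g u + (v-u)*(f u + f v)/2\<bar>)"
      using lam by (intro mult_left_mono) auto
    then show ?thesis using lipg unfolding pe qe by linarith
  qed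
  have lip: "\<bar>f y - f x\<bar> \<le> L * \<bar>y - x\<bar>" if x: "x \<in> {a..b}" and y: "y \<in> {a..b}" for x y
  proof (cases "x \<le> y")
    case True
    then show ?thesis using lipL[OF lam C0 cf dg H x y True] unfolding L_def by simp
  next
    case False
    then show ?thesis using lipL[OF lam C0 cf dg H y x] unfolding L_def
      by (simp add: abs_minus_commute)
  qed
  have p1: "\<bar>\<psi> (s, 0, g s) - \<psi> (t, 0, g t)\<bar> \<le> L * \<bar>s - t\<bar>"
    using lip[OF tab sab] unfolding f_def .
  have t1: "1 * (g t - g s + f s * (t - s)) \<le> L * (t - s)^2 / 2"
    by (rule taylor1[OF ab dg lip sab tab]) auto
  have t2: "(-1) * (g t - g s + f s * (t - s)) \<le> L * (t - s)^2 / 2"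
    by (rule taylor1[OF ab dg lip sab tab]) auto
  have E: "g t - g s - g' s * (t - s) = g t - g s + f s * (t - s)" using g'f[OF assms(11)] by simp
  have p2': "\<bar>g t - g s + f s * (t - s)\<bar> \<le> L * (t - s)^2 / 2"
    unfolding abs_le_iff using t1 t2 by (intro conjI) (simp_all only: mult_1 mult_minus1)
  have p2: "\<bar>g t - g s - g' s * (t - s)\<bar> \<le> L * (t - s)^2 / 2"
    unfolding E by (rule p2')
  show ?thesis using p1 p2 unfolding L_def by simp
qed

end
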